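(* Let $V$ be a finite set, $A\subseteq V$, ${\bf t}=(t_i)_{i\in V}$ and $\lambda$ complex numbers, and let $I=(i_1,\ldots,i_k)$ and $J=(j_1,\ldots,j_k)$ be ordered $k$-tuples of distinct elements of $A$. Then $$\int\mathcal{D}_{A,{\bf t}}(\psi,\bar\psi)\,\mathcal{O}_{I,J}\,f_A^{(\lambda)}=\begin{cases}\lambda+\sum_{i\in A}(t_i-\lambda)&\text{if }k=0,\\1&\text{if }k=1,\\0&\text{if }k\ge2.\end{cases}$$
   Context: For each $i\in V$ let $\psi_i,\bar\psi_i$ be anticommuting generators of a Grassmann algebra over $\mathbb{C}$; $\tau_A=\prod_{i\in A}\bar\psi_i\psi_i$ ($\tau_\emptyset=1$); $f_A^{(\lambda)}=\lambda(1-|A|)\tau_A+\sum_{i\in A}\tau_{A\setminus\{i\}}-\sum_{i,j\in A,\ i\neq j}\bar\psi_i\psi_j\,\tau_{A\setminus\{i,j\}}$; $\mathcal{O}_{I,J}=\bar\psi_{i_1}\psi_{j_1}\cdots\bar\psi_{i_k}\psi_{j_k}$ ($=1$ for $k=0$). $\mathcal{D}_{A,{\bf t}}(\psi,\bar\psi)=\prod_{i\in A}d\psi_i\,d\bar\psi_i\,e^{t_i\bar\psi_i\psi_i}$, with $\int d\psi_i\,d\bar\psi_i\,\bar\psi_i\psi_i=1$ and integrals of $1,\psi_i,\bar\psi_i$ equal to $0$. *)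

theory Defs
  imports Complex_Main "HOL-Library.Product_Lexorder"
begin

text \<open>Grassmann algebra over the complex numbers with generators of a linearly ordered
type 'g.  An element is given by its coefficients on the basis monomials
e_S = g_1 g_2 ... g_m (S = {g_1 < ... < g_m} a finite set of generators).\<close>

type_synonym 'g grass = "'g set \<Rightarrow> complex"

definition inv_count :: "'g::linorder set \<Rightarrow> 'g set \<Rightarrow> nat" where
  "inv_count T U = card {(a, b). a \<in> T \<and> b \<in> U \<and> b < a}"

text \<open>Product: e_T e_U = (-1)^(inversions) e_(T \<union> U) if T, U disjoint, 0 otherwise.\<close>
definition gmul :: "'g::linorder grass \<Rightarrow> 'g grass \<Rightarrow> 'g grass" where
  "gmul x y = (\<lambda>S. if finite S
      then (\<Sum>T\<in>Pow S. (-1) ^ inv_count T (S - T) * x T * y (S - T)) else 0)"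

definition gadd :: "'g grass \<Rightarrow> 'g grass \<Rightarrow> 'g grass" where
  "gadd x y = (\<lambda>S. x S + y S)"

definition gscal :: "complex \<Rightarrow> 'g grass \<Rightarrow> 'g grass" where
  "gscal c x = (\<lambda>S. c * x S)"

definition gbasis :: "'g set \<Rightarrow> 'g grass" where
  "gbasis S = (\<lambda>U. if U = S then 1 else 0)"

definition gone :: "'g grass" where
  "gone = gbasis {}"

definition gconst :: "complex \<Rightarrow> 'g grass" where
  "gconst c = gscal c gone"

definition gprod_list :: "'g::linorder grass list \<Rightarrow> 'g grass" where
  "gprod_list xs = foldr gmul xs gone"

definition psi :: "'v::linorder \<Rightarrow> ('v \<times> bool) grass" where
  "psi i = gbasis {(i, False)}"

definition psibar :: "'v::linorder \<Rightarrow> ('v \<times> bool) grass" where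
  "psibar i = gbasis {(i, True)}"

definition tau :: "'v::linorder set \<Rightarrow> ('v \<times> bool) grass" where
  "tau A = gprod_list (map (\<lambda>i. gmul (psibar i) (psi i)) (sorted_list_of_set A))"

definition fA :: "complex \<Rightarrow> 'v::linorder set \<Rightarrow> ('v \<times> bool) grass" where
  "fA lam A = (\<lambda>S. lam * (1 - of_nat (card A)) * tau A S
      + (\<Sum>i\<in>A. tau (A - {i}) S)
      - (\<Sum>i\<in>A. \<Sum>j\<in>A - {i}. gmul (gmul (psibar i) (psi j)) (tau (A - {i, j})) S))"

definition obs :: "'v::linorder list \<Rightarrow> 'v list \<Rightarrow> ('v \<times> bool) grass" where
  "obs I J = gprod_list (map (\<lambda>(i, j). gmul (psibar i) (psi j)) (zip I J))"

text \<open>Density factor  prod_{i in A} e^{t_i psibar_i psi_i} = prod_{i in A} (1 + t_i psibar_i psi_i)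
 (the exponent is nilpotent of order 2).\<close>
definition gauss_weight :: "('v::linorder \<Rightarrow> complex) \<Rightarrow> 'v set \<Rightarrow> ('v \<times> bool) grass" where
  "gauss_weight t A = gprod_list
     (map (\<lambda>i. gadd gone (gscal (t i) (gmul (psibar i) (psi i)))) (sorted_list_of_set A))"

definition gens :: "'v set \<Rightarrow> ('v \<times> bool) set" where
  "gens A = (\<lambda>i. (i, True)) ` A \<union> (\<lambda>i. (i, False)) ` A"

text \<open>Berezin integral  \<integral> prod_{i in A} d psi_i d psibar_i  F : writing
 F = tau A * G + (terms lacking some generator of A) with G free of the generators of A,
 the integral is G (since \<integral> d psi_i d psibar_i psibar_i psi_i = 1 and the pairs are even).
 The coefficient of tau A * e_S in basis e_(gens A \<union> S) is \<plusminus>1.\<close>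
definition berezin :: "'v::linorder set \<Rightarrow> ('v \<times> bool) grass \<Rightarrow> ('v \<times> bool) grass" where
  "berezin A F = (\<lambda>S. if S \<inter> gens A = {}
      then F (gens A \<union> S) * gmul (tau A) (gbasis S) (gens A \<union> S) else 0)"

end

theory Submission
  imports Defs
begin


abbreviation sg :: "'g::linorder set \<Rightarrow> 'g set \<Rightarrow> complex" where
  "sg T U \<equiv> (-1) ^ inv_count T U"

lemma inv_add_left:
  assumes "finite T" "finite U" "finite W" "T \<inter> U = {}"
  shows "inv_count (T \<union> U) W = inv_count T W + inv_count U W"
proof -
  have "{(a, b). a \<in> T \<union> U \<and> b \<in> W \<and> b < a} =
        {(a, b). a \<in> T \<and> b \<in> W \<and> b < a} \<union> {(a, b). a \<in> U \<and> b \<in> W \<and> b < a}" by auto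
  moreover have "finite {(a, b). a \<in> T \<and> b \<in> W \<and> b < a}"
    by (rule finite_subset[of _ "T \<times> W"]) (use assms in auto)
  moreover have "finite {(a, b). a \<in> U \<and> b \<in> W \<and> b < a}"
    by (rule finite_subset[of _ "U \<times> W"]) (use assms in auto)
  ultimately show ?thesis unfolding inv_count_def
    by (subst card_Un_disjoint[symmetric]) (use assms in auto)
qed

lemma inv_add_right:
  assumes "finite T" "finite U" "finite W" "U \<inter> W = {}"
  shows "inv_count T (U \<union> W) = inv_count T U + inv_count T W"
proof -
  have "{(a, b). a \<in> T \<and> b \<in> U \<union> W \<and> b < a} =
        {(a, b). a \<in> T \<and> b \<in> U \<and> b < a} \<union> {(a, b). a \<in> T \<and> b \<in> W \<and> b < a}" by auto
  moreover have "finite {(a, b). a \<in> T \<and> b \<in> U \<and> b < a}"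
    by (rule finite_subset[of _ "T \<times> U"]) (use assms in auto)
  moreover have "finite {(a, b). a \<in> T \<and> b \<in> W \<and> b < a}"
    by (rule finite_subset[of _ "T \<times> W"]) (use assms in auto)
  ultimately show ?thesis unfolding inv_count_def
    by (subst card_Un_disjoint[symmetric]) (use assms in auto)
qed

lemma inv_swap:
  assumes "finite T" "finite U" "T \<inter> U = {}"
  shows "inv_count T U + inv_count U T = card T * card U"
proof -
  let ?X = "{(a, b). a \<in> T \<and> b \<in> U \<and> b < a}"
  let ?Y = "{(a, b). a \<in> T \<and> b \<in> U \<and> a < b}"
  have "?X \<union> ?Y = T \<times> U" using assms by (auto simp: not_less order.order_iff_strict)
  moreover have "finite ?X" by (rule finite_subset[of _ "T \<times> U"]) (use assms in auto)
  moreover have "finite ?Y" by (rule finite_subset[of _ "T \<times> U"]) (use assms in auto)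
  moreover have "?X \<inter> ?Y = {}" by auto
  moreover have "card ?Y = inv_count U T"
  proof -
    have "?Y = (\<lambda>(a,b). (b,a)) ` {(a, b). a \<in> U \<and> b \<in> T \<and> b < a}" by auto
    moreover have "inj_on (\<lambda>(a,b). (b,a)) {(a, b). a \<in> U \<and> b \<in> T \<and> b < a}"
      by (auto simp: inj_on_def)
    ultimately show ?thesis unfolding inv_count_def by (simp add: card_image)
  qed
  ultimately have "card ?X + card ?Y = card (T \<times> U)"
    using card_Un_disjoint[of ?X ?Y] by simp
  thus ?thesis using \<open>card ?Y = inv_count U T\<close> unfolding inv_count_def
    by (simp add: card_cartesian_product)
qed

lemma sg_eq_if_even: "even (a + b) \<Longrightarrow> ((-1::complex) ^ a) = (-1) ^ b"
  by (cases "even a") simp_all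

lemma gmul_assoc: "gmul (gmul x y) z = gmul x (gmul y z)"
proof
  fix S :: "'a set"
  show "gmul (gmul x y) z S = gmul x (gmul y z) S"
  proof (cases "finite S")
    case False thus ?thesis by (simp add: gmul_def)
  next
    case fS: True
    have L0: "gmul (gmul x y) z S = (\<Sum>T\<in>Pow S. \<Sum>R\<in>Pow T.
        sg T (S - T) * sg R (T - R) * x R * y (T - R) * z (S - T))"
      unfolding gmul_def using fS
      by (auto simp: sum_distrib_left sum_distrib_right finite_subset mult.assoc intro!: sum.cong)
    have L: "gmul (gmul x y) z S = (\<Sum>(T,R)\<in>Sigma (Pow S) Pow.
        sg T (S - T) * sg R (T - R) * x R * y (T - R) * z (S - T))"
      unfolding L0 using fS by (intro sum.Sigma) (auto intro: finite_subset)
    have R0: "gmul x (gmul y z) S = (\<Sum>R\<in>Pow S. \<Sum>U\<in>Pow (S - R).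
        sg R (S - R) * sg U (S - R - U) * x R * y U * z (S - R - U))"
      unfolding gmul_def using fS
      by (auto simp: sum_distrib_left mult.assoc intro!: sum.cong)
    have R: "gmul x (gmul y z) S = (\<Sum>(R,U)\<in>Sigma (Pow S) (\<lambda>R. Pow (S - R)).
        sg R (S - R) * sg U (S - R - U) * x R * y U * z (S - R - U))"
      unfolding R0 using fS by (intro sum.Sigma) auto
    have "(\<Sum>(T,R)\<in>Sigma (Pow S) Pow.
        sg T (S - T) * sg R (T - R) * x R * y (T - R) * z (S - T)) =
       (\<Sum>(R,U)\<in>Sigma (Pow S) (\<lambda>R. Pow (S - R)).
        sg R (S - R) * sg U (S - R - U) * x R * y U * z (S - R - U))"
    proof (rule sum.reindex_bij_witness[where i="\<lambda>(R,U). (R \<union> U, R)" and j="\<lambda>(T,R). (R, T - R)"])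
      fix a assume "a \<in> Sigma (Pow S) Pow"
      then obtain T R where a: "a = (T,R)" "T \<subseteq> S" "R \<subseteq> T" by auto
      let ?U = "T - R" and ?W = "S - T"
      have f: "finite T" "finite R" "finite ?U" "finite ?W" using a fS by (meson finite_Diff finite_subset)+
      have e1: "S - R = ?U \<union> ?W" "S - R - ?U = ?W" using a by auto
      have "inv_count T ?W = inv_count R ?W + inv_count ?U ?W"
        using inv_add_left[of R ?U ?W] f a by (metis Diff_disjoint Un_Diff_cancel sup.absorb2)
      moreover have "inv_count R (S - R) = inv_count R ?U + inv_count R ?W"
        using inv_add_right[of R ?U ?W] f e1 by auto
      ultimately have "inv_count T ?W + inv_count R ?U = inv_count R (S - R) + inv_count ?U ?W"
        by simp
      hence eq: "sg T ?W * sg R ?U = sg R (S - R) * sg ?U ?W"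
        by (metis power_add)
      show "(case (case a of (T, R) \<Rightarrow> (R, T - R)) of
             (R, U) \<Rightarrow> sg R (S - R) * sg U (S - R - U) * x R * y U * z (S - R - U)) =
            (case a of (T, R) \<Rightarrow> sg T (S - T) * sg R (T - R) * x R * y (T - R) * z (S - T))"
        unfolding a(1) split e1(2) eq ..
    qed (auto simp: Pow_def)
    thus ?thesis using L R by simp
  qed
qed



definition supp :: "('g set \<Rightarrow> bool) \<Rightarrow> 'g grass \<Rightarrow> bool" where
  "supp P x \<longleftrightarrow> (\<forall>S. x S \<noteq> 0 \<longrightarrow> P S)"
definition fin :: "'g grass \<Rightarrow> bool" where
  "fin x \<longleftrightarrow> (\<forall>S. infinite S \<longrightarrow> x S = 0)"

lemma inv_count_empty[simp]: "inv_count {} U = 0" "inv_count T {} = 0"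
  by (simp_all add: inv_count_def)

lemma fin_gmul[simp]: "fin (gmul x y)" by (simp add: fin_def gmul_def)
lemma fin_gbasis: "finite T \<Longrightarrow> fin (gbasis T)" by (auto simp: fin_def gbasis_def)
lemma fin_gone[simp]: "fin gone" by (simp add: gone_def fin_gbasis)

lemma gmul_gone_left: assumes "fin x" shows "gmul gone x = x"
proof
  fix S :: "'a set"
  show "gmul gone x S = x S"
  proof (cases "finite S")
    case False thus ?thesis using assms by (simp add: gmul_def fin_def)
  next
    case True
    have aux: "\<And>T. sg T (S - T) * (if T = {} then 1 else 0) * x (S - T) = (if T = {} then x S else 0)"
      by auto
    show ?thesis using True by (simp add: gmul_def gone_def gbasis_def aux)
  qed
qed

lemma gmul_gone_right: assumes "fin x" shows "gmul x gone = x"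
proof
  fix S :: "'a set"
  show "gmul x gone S = x S"
  proof (cases "finite S")
    case False thus ?thesis using assms by (simp add: gmul_def fin_def)
  next
    case True
    have aux: "\<And>T. sg T (S - T) * x T * (if S = T then 1 else 0) = (if S = T then x S else 0)"
      by auto
    show ?thesis using True by (simp add: gmul_def gone_def gbasis_def aux)
  qed
qed

lemma gmul_comm_even:
  assumes "supp (\<lambda>T. even (card T)) x" shows "gmul x y = gmul y x"
proof
  fix S :: "'a set"
  show "gmul x y S = gmul y x S"
  proof (cases "finite S")
    case False thus ?thesis by (simp add: gmul_def)
  next
    case fS: True
    have "(\<Sum>T\<in>Pow S. sg T (S - T) * x T * y (S - T)) = (\<Sum>U\<in>Pow S. sg U (S - U) * y U * x (S - U))"
    proof (rule sum.reindex_bij_witness[where i="\<lambda>T. S - T" and j="\<lambda>T. S - T"])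
      fix T assume T: "T \<in> Pow S"
      have e: "S - (S - T) = T" using T by auto
      have "sg T (S - T) * x T = sg (S - T) T * x T"
      proof (cases "x T = 0")
        case False
        hence ev: "even (card T)" using assms by (auto simp: supp_def)
        have "finite T" "finite (S - T)" using T fS by (auto intro: finite_subset)
        hence "inv_count T (S - T) + inv_count (S - T) T = card T * card (S - T)"
          by (intro inv_swap) auto
        hence "even (inv_count T (S - T) + inv_count (S - T) T)" using ev by simp
        thus ?thesis using sg_eq_if_even by metis
      qed simp
      hence "sg (S - T) T * x T * y (S - T) = sg T (S - T) * x T * y (S - T)" by (simp only:)
      thus "sg (S - T) (S - (S - T)) * y (S - T) * x (S - (S - T)) = sg T (S - T) * x T * y (S - T)"
        unfolding e by (simp add: algebra_simps)
    qed auto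
    thus ?thesis unfolding gmul_def using fS by simp
  qed
qed

lemma gmul_cmul_left: "gmul (\<lambda>S. c * x S) y = (\<lambda>S. c * gmul x y S)"
  by (auto simp: gmul_def sum_distrib_left algebra_simps)
lemma gmul_cmul_right: "gmul x (\<lambda>S. c * y S) = (\<lambda>S. c * gmul x y S)"
  by (auto simp: gmul_def sum_distrib_left algebra_simps)
lemma gmul_add_left: "gmul (\<lambda>S. x S + z S) y = (\<lambda>S. gmul x y S + gmul z y S)"
  by (auto simp: gmul_def sum.distrib algebra_simps)
lemma gmul_add_right: "gmul x (\<lambda>S. y S + z S) = (\<lambda>S. gmul x y S + gmul x z S)"
  by (auto simp: gmul_def sum.distrib algebra_simps)
lemma gmul_diff_right: "gmul x (\<lambda>S. y S - z S) = (\<lambda>S. gmul x y S - gmul x z S)"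
  by (auto simp: gmul_def sum_subtractf algebra_simps)
lemma gmul_sum_right: "gmul x (\<lambda>S. \<Sum>i\<in>K. y i S) = (\<lambda>S. \<Sum>i\<in>K. gmul x (y i) S)"
proof
  fix S :: "'a set"
  show "gmul x (\<lambda>S. \<Sum>i\<in>K. y i S) S = (\<Sum>i\<in>K. gmul x (y i) S)"
    by (cases "finite S") (simp_all add: gmul_def sum_distrib_left sum.swap[of _ K])
qed
lemma gmul_zero_left[simp]: "gmul (\<lambda>_. 0) y = (\<lambda>_. 0)"
  by (auto simp: gmul_def)
lemma gmul_zero_right[simp]: "gmul x (\<lambda>_. 0) = (\<lambda>_. 0)"
  by (auto simp: gmul_def)

lemma gmul_gscal_left: "gmul (gscal c x) y = gscal c (gmul x y)"
  unfolding gscal_def by (rule gmul_cmul_left)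
lemma gmul_gscal_right: "gmul x (gscal c y) = gscal c (gmul x y)"
  unfolding gscal_def by (rule gmul_cmul_right)
lemma gmul_gadd_left: "gmul (gadd x z) y = gadd (gmul x y) (gmul z y)"
  unfolding gadd_def by (rule gmul_add_left)
lemma gmul_gadd_right: "gmul x (gadd y z) = gadd (gmul x y) (gmul x z)"
  unfolding gadd_def by (rule gmul_add_right)

lemma gmul_gbasis:
  assumes "finite T" "finite U"
  shows "gmul (gbasis T) (gbasis U) = (if T \<inter> U = {} then gscal (sg T U) (gbasis (T \<union> U)) else (\<lambda>_. 0))"
proof
  fix S :: "'a set"
  show "gmul (gbasis T) (gbasis U) S = (if T \<inter> U = {} then gscal (sg T U) (gbasis (T \<union> U)) else (\<lambda>_. 0)) S"
  proof (cases "finite S")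
    case False
    hence "S \<noteq> T \<union> U" using assms by auto
    thus ?thesis using False by (simp add: gmul_def gbasis_def gscal_def)
  next
    case fS: True
    have aux: "\<And>R. sg R (S - R) * (if R = T then 1 else 0) * (if S - R = U then 1 else 0)
       = (if R = T then (if S - T = U then sg T U else 0) else 0)" by auto
    have "gmul (gbasis T) (gbasis U) S = (if T \<subseteq> S \<and> S - T = U then sg T U else 0)"
      using fS by (simp add: gmul_def gbasis_def aux)
    also have "\<dots> = (if T \<inter> U = {} then gscal (sg T U) (gbasis (T \<union> U)) else (\<lambda>_. 0)) S"
      by (auto simp: gscal_def gbasis_def)
    finally show ?thesis .
  qed
qed

lemma supp_gmul:
  assumes "supp P x" "supp Q y"
    and "\<And>T U. finite T \<Longrightarrow> finite U \<Longrightarrow> T \<inter> U = {} \<Longrightarrow> P T \<Longrightarrow> Q U \<Longrightarrow> R (T \<union> U)"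
  shows "supp R (gmul x y)"
  unfolding supp_def
proof (intro allI impI)
  fix S assume "gmul x y S \<noteq> 0"
  hence fS: "finite S" and ne: "(\<Sum>T\<in>Pow S. sg T (S - T) * x T * y (S - T)) \<noteq> 0"
    by (auto simp: gmul_def split: if_splits)
  obtain T where T: "T \<in> Pow S" "sg T (S - T) * x T * y (S - T) \<noteq> 0"
    using sum.not_neutral_contains_not_neutral[OF ne] by blast
  hence "P T" "Q (S - T)" using assms(1,2) by (auto simp: supp_def)
  moreover have "finite T" "finite (S - T)" using T fS by (auto intro: finite_subset)
  ultimately have "R (T \<union> (S - T))" using assms(3) by blast
  moreover have "T \<union> (S - T) = S" using T by auto
  ultimately show "R S" by simp
qed

lemma supp_mono: "supp P x \<Longrightarrow> (\<And>S. P S \<Longrightarrow> Q S) \<Longrightarrow> supp Q x"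
  by (auto simp: supp_def)
lemma supp_conj: "supp P x \<Longrightarrow> supp Q x \<Longrightarrow> supp (\<lambda>S. P S \<and> Q S) x"
  by (auto simp: supp_def)
lemma supp_gbasis: "supp (\<lambda>S. S = T) (gbasis T)"
  by (auto simp: supp_def gbasis_def)
lemma supp_gadd: "supp P x \<Longrightarrow> supp P y \<Longrightarrow> supp P (gadd x y)"
  unfolding supp_def gadd_def by (metis add.left_neutral)
lemma supp_gscal: "supp P x \<Longrightarrow> supp P (gscal c x)"
  by (auto simp: supp_def gscal_def)
lemma supp_zero: "supp P x \<Longrightarrow> \<not> P S \<Longrightarrow> x S = 0"
  by (auto simp: supp_def)



definition q :: "'v::linorder \<Rightarrow> ('v \<times> bool) grass" where "q i = gmul (psibar i) (psi i)"
definition pp :: "'v::linorder \<Rightarrow> 'v \<Rightarrow> ('v \<times> bool) grass" where "pp i j = gmul (psibar i) (psi j)"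
definition lprod :: "('a \<Rightarrow> 'g::linorder grass) \<Rightarrow> 'a list \<Rightarrow> 'g grass" where
  "lprod h xs = foldr gmul (map h xs) gone"
definition ev :: "'g grass \<Rightarrow> bool" where "ev x = supp (\<lambda>T. even (card T)) x"
definition sbas :: "'g set \<Rightarrow> 'g grass \<Rightarrow> bool" where
  "sbas X x \<longleftrightarrow> (\<exists>s. s * s = 1 \<and> x = gscal s (gbasis X))"
definition ch :: "('v \<times> bool) set \<Rightarrow> 'v \<Rightarrow> int" where
  "ch S i = (if (i, True) \<in> S then 1 else 0) - (if (i, False) \<in> S then 1 else 0)"
definition dl :: "'v \<Rightarrow> 'v \<Rightarrow> int" where "dl i = (\<lambda>x. if x = i then 1 else 0)"

lemma lprod_Nil[simp]: "lprod h [] = gone" by (simp add: lprod_def)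
lemma lprod_Cons[simp]: "lprod h (x # xs) = gmul (h x) (lprod h xs)" by (simp add: lprod_def)
lemma fin_lprod: "fin (lprod h xs)" by (cases xs) auto

lemma ev_gmul: "ev x \<Longrightarrow> ev y \<Longrightarrow> ev (gmul x y)"
  unfolding ev_def by (erule supp_gmul, assumption) (simp add: card_Un_disjoint)

lemma lprod_insort:
  assumes "\<And>x. ev (h x)"
  shows "lprod h (insort i xs) = gmul (h i) (lprod h xs)"
proof (induction xs)
  case Nil thus ?case by simp
next
  case (Cons x xs)
  show ?case
  proof (cases "i \<le> x")
    case True thus ?thesis by simp
  next
    case False
    have "lprod h (insort i (x # xs)) = gmul (h x) (gmul (h i) (lprod h xs))"
      using False Cons by simp
    also have "\<dots> = gmul (gmul (h x) (h i)) (lprod h xs)" by (simp add: gmul_assoc)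
    also have "gmul (h x) (h i) = gmul (h i) (h x)"
      using assms[of x] by (simp add: ev_def gmul_comm_even)
    finally show ?thesis by (simp add: gmul_assoc)
  qed
qed

lemma lprod_insert:
  assumes "\<And>x. ev (h x)" "finite B" "i \<notin> B"
  shows "lprod h (sorted_list_of_set (insert i B)) = gmul (h i) (lprod h (sorted_list_of_set B))"
  using assms by (simp add: sorted_list_of_set_insert lprod_insort)

lemma lprod_supp:
  assumes "P {}" "\<And>T U. finite T \<Longrightarrow> finite U \<Longrightarrow> T \<inter> U = {} \<Longrightarrow> P T \<Longrightarrow> P U \<Longrightarrow> P (T \<union> U)"
    and "\<And>x. x \<in> set xs \<Longrightarrow> supp P (h x)"
  shows "supp P (lprod h xs)"
  using assms(3)
proof (induction xs)
  case Nil thus ?case using assms(1) by (simp add: gone_def supp_mono[OF supp_gbasis])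
next
  case (Cons x xs) thus ?case by (simp, intro supp_gmul[where P=P and Q=P]) (auto intro: assms(2))
qed

lemma gscal_gscal: "gscal a (gscal b x) = gscal (a * b) x" by (simp add: gscal_def mult.assoc)
lemma sg_sq: "sg T U * sg T U = 1" by (simp add: power_mult_distrib[symmetric])

lemma sbas_gbasis: "sbas X (gbasis X)"
  unfolding sbas_def by (rule exI[of _ 1]) (simp add: gscal_def)

lemma sbas_gmul:
  assumes "sbas X x" "sbas Y y" "finite X" "finite Y" "X \<inter> Y = {}"
  shows "sbas (X \<union> Y) (gmul x y)"
proof -
  obtain s s' where s: "s * s = 1" "x = gscal s (gbasis X)" "s' * s' = 1" "y = gscal s' (gbasis Y)"
    using assms(1,2) unfolding sbas_def by blast
  have "gmul x y = gscal (s * (s' * sg X Y)) (gbasis (X \<union> Y))"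
    using s assms by (simp add: gmul_gscal_left gmul_gscal_right gmul_gbasis gscal_gscal mult.left_commute)
  moreover have "(s * (s' * sg X Y)) * (s * (s' * sg X Y)) = 1"
  proof -
    have "(s * (s' * sg X Y)) * (s * (s' * sg X Y)) = (s * s) * (s' * s') * (sg X Y * sg X Y)"
      by (simp add: algebra_simps)
    thus ?thesis using s sg_sq by simp
  qed
  ultimately show ?thesis unfolding sbas_def by blast
qed

lemma sbas_supp: assumes "sbas X x" shows "supp (\<lambda>S. S = X) x"
proof -
  obtain s where "x = gscal s (gbasis X)" using assms unfolding sbas_def by blast
  thus ?thesis by (simp add: supp_def gscal_def gbasis_def)
qed
lemma sbas_val: "sbas X x \<Longrightarrow> x X * x X = 1"
  unfolding sbas_def by (auto simp: gscal_def gbasis_def)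
lemma sbas_ev: "sbas X x \<Longrightarrow> even (card X) \<Longrightarrow> ev x"
  unfolding ev_def by (erule supp_mono[OF sbas_supp]) simp

lemma gens_insert: "gens (insert i B) = {(i, True), (i, False)} \<union> gens B"
  by (auto simp: gens_def)
lemma gens_empty[simp]: "gens {} = {}" by (simp add: gens_def)
lemma finite_gens[simp]: "finite B \<Longrightarrow> finite (gens B)" by (simp add: gens_def)
lemma card_gens: "finite B \<Longrightarrow> card (gens B) = 2 * card B"
proof -
  assume f: "finite B"
  have "card (gens B) = card ((\<lambda>i. (i, True)) ` B) + card ((\<lambda>i. (i, False)) ` B)"
    unfolding gens_def using f by (intro card_Un_disjoint) auto
  also have "\<dots> = 2 * card B" by (simp add: card_image inj_on_def)
  finally show ?thesis .
qed

lemma q_sbas: "sbas {(i, True), (i, False)} (q i)"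
proof -
  have "sbas ({(i, True)} \<union> {(i, False)}) (q i)"
    unfolding q_def psi_def psibar_def by (rule sbas_gmul) (auto intro: sbas_gbasis)
  thus ?thesis by (simp add: insert_commute)
qed
lemma pp_sbas: "sbas {(i, True), (j, False)} (pp i j)"
proof -
  have "sbas ({(i, True)} \<union> {(j, False)}) (pp i j)"
    unfolding pp_def psi_def psibar_def by (rule sbas_gmul) (auto intro: sbas_gbasis)
  thus ?thesis by (simp add: insert_commute)
qed
lemma q_ev: "ev (q i)" by (rule sbas_ev[OF q_sbas]) simp

lemma ev_gone: "ev gone" by (simp add: ev_def gone_def supp_mono[OF supp_gbasis])
lemma ev_gadd: "ev x \<Longrightarrow> ev y \<Longrightarrow> ev (gadd x y)" by (simp add: ev_def supp_gadd)
lemma ev_gscal: "ev x \<Longrightarrow> ev (gscal c x)" by (simp add: ev_def supp_gscal)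

abbreviation wfac :: "('v::linorder \<Rightarrow> complex) \<Rightarrow> 'v \<Rightarrow> ('v \<times> bool) grass" where
  "wfac t i \<equiv> gadd gone (gscal (t i) (q i))"

lemma wf_ev: "ev (wfac t i)" by (intro ev_gadd ev_gone ev_gscal q_ev)

lemma tau_lprod: "tau B = lprod q (sorted_list_of_set B)"
  by (simp add: tau_def gprod_list_def lprod_def q_def[abs_def])
lemma gw_lprod: "gauss_weight t B = lprod (wfac t) (sorted_list_of_set B)"
  by (simp add: gauss_weight_def gprod_list_def lprod_def q_def[abs_def])

lemma tau_insert: "finite B \<Longrightarrow> i \<notin> B \<Longrightarrow> tau (insert i B) = gmul (q i) (tau B)"
  unfolding tau_lprod by (rule lprod_insert) (auto intro: q_ev)
lemma gw_insert: "finite B \<Longrightarrow> i \<notin> B \<Longrightarrow> gauss_weight t (insert i B) = gmul (wfac t i) (gauss_weight t B)"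
  unfolding gw_lprod by (rule lprod_insert) (auto intro: wf_ev)
lemma tau_empty[simp]: "tau {} = gone" by (simp add: tau_lprod)
lemma gw_empty[simp]: "gauss_weight t {} = gone" by (simp add: gw_lprod)
lemma fin_tau: "fin (tau B)" by (simp add: tau_lprod fin_lprod)
lemma fin_gw: "fin (gauss_weight t B)" by (simp add: gw_lprod fin_lprod)

lemma tau_sbas: "finite B \<Longrightarrow> sbas (gens B) (tau B)"
proof (induction B rule: finite_induct)
  case empty thus ?case by (simp add: gone_def sbas_gbasis)
next
  case (insert i B)
  thus ?case unfolding tau_insert[OF insert(1,2)] gens_insert
    by (intro sbas_gmul q_sbas) (auto simp: gens_def)
qed

lemma q_sq: "gmul (q i) (q i) = (\<lambda>_. 0)"
proof -
  obtain s where "q i = gscal s (gbasis {(i, True), (i, False)})"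
    using q_sbas unfolding sbas_def by blast
  thus ?thesis by (simp add: gmul_gscal_left gmul_gscal_right gmul_gbasis) (simp add: gscal_def)
qed

lemma q_tau_mem: assumes "finite B" "i \<in> B" shows "gmul (q i) (tau B) = (\<lambda>_. 0)"
proof -
  have "tau B = gmul (q i) (tau (B - {i}))"
    using tau_insert[of "B - {i}" i] assms by (simp add: insert_absorb)
  thus ?thesis by (simp add: gmul_assoc[symmetric] q_sq)
qed

lemma anticomm:
  assumes "g \<noteq> h"
  shows "gmul (gbasis {g}) (gbasis {h}) = gscal (-1) (gmul (gbasis {h}) (gbasis {g}))"
proof -
  have "inv_count {g} {h} + inv_count {h} {g} = 1"
    using inv_swap[of "{g}" "{h}"] assms by simp
  hence "sg {g} {h} = - sg {h} {g}"
    by (cases "inv_count {g} {h}") auto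
  thus ?thesis using assms by (simp add: gmul_gbasis gscal_gscal insert_commute)
qed

lemma pp_pp: assumes "a \<noteq> b" shows "gmul (pp a b) (pp b a) = gscal (-1) (gmul (q a) (q b))"
proof -
  have c1: "gmul (psi b) (psibar b) = gscal (-1) (q b)"
    unfolding q_def psi_def psibar_def by (rule anticomm) simp
  have c2: "gmul (q b) (psi a) = gmul (psi a) (q b)"
    using gmul_comm_even q_ev unfolding ev_def by blast
  have "gmul (pp a b) (pp b a) = gmul (psibar a) (gmul (gmul (psi b) (psibar b)) (psi a))"
    unfolding pp_def by (simp add: gmul_assoc)
  also have "\<dots> = gscal (-1) (gmul (psibar a) (gmul (psi a) (q b)))"
    unfolding c1 by (simp add: gmul_gscal_left gmul_gscal_right c2)
  also have "\<dots> = gscal (-1) (gmul (q a) (q b))"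
    unfolding q_def by (simp add: gmul_assoc)
  finally show ?thesis .
qed

lemma ch_Un: "T \<inter> U = {} \<Longrightarrow> ch (T \<union> U) = (\<lambda>i. ch T i + ch U i)"
  by (auto simp: ch_def fun_eq_iff)

lemma supp_ch_gmul:
  "supp (\<lambda>S. ch S = c) x \<Longrightarrow> supp (\<lambda>S. ch S = d) y \<Longrightarrow> supp (\<lambda>S. ch S = (\<lambda>i. c i + d i)) (gmul x y)"
  by (erule supp_gmul, assumption) (simp add: ch_Un)

lemma ch_gens: "ch (gens B) = (\<lambda>_. 0)" by (auto simp: ch_def gens_def fun_eq_iff)
lemma ch_pair: "i \<noteq> j \<Longrightarrow> ch {(i, True), (j, False)} = (\<lambda>x. dl i x - dl j x)"
  by (auto simp: ch_def dl_def fun_eq_iff)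

lemma supp_ch0: "supp (\<lambda>S. ch S = (\<lambda>_. 0)) x \<Longrightarrow> supp (\<lambda>S. ch S = (\<lambda>_. 0)) y \<Longrightarrow> supp (\<lambda>S. ch S = (\<lambda>_. 0)) (gmul x y)"
  using supp_ch_gmul[of "\<lambda>_. 0" x "\<lambda>_. 0" y] by simp

lemma ch_q: "supp (\<lambda>S. ch S = (\<lambda>_. 0)) (q i)"
  by (rule supp_mono[OF sbas_supp[OF q_sbas]]) (simp add: ch_def fun_eq_iff)
lemma ch_gone: "supp (\<lambda>S. ch S = (\<lambda>_. 0)) gone"
  by (rule supp_mono[OF supp_gbasis[of "{}"], folded gone_def]) (simp add: ch_def fun_eq_iff)
lemma ch_tau: "finite B \<Longrightarrow> supp (\<lambda>S. ch S = (\<lambda>_. 0)) (tau B)"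
  by (rule supp_mono[OF sbas_supp[OF tau_sbas]]) (auto simp: ch_gens)
lemma ch_gw: "supp (\<lambda>S. ch S = (\<lambda>_. 0)) (gauss_weight t B)"
  unfolding gw_lprod
  by (rule lprod_supp) (auto simp: ch_def ch_Un intro: supp_gadd supp_gscal ch_q ch_gone)
lemma ch_pp: "i \<noteq> j \<Longrightarrow> supp (\<lambda>S. ch S = (\<lambda>x. dl i x - dl j x)) (pp i j)"
  by (rule supp_mono[OF sbas_supp[OF pp_sbas]]) (simp add: ch_pair)

lemma top_zero: assumes "supp (\<lambda>S. ch S = c) x" "c \<noteq> (\<lambda>_. 0)" shows "x (gens A) = 0"
proof (rule ccontr)
  assume "x (gens A) \<noteq> 0"
  hence "ch (gens A) = c" using assms(1) by (simp add: supp_def)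
  thus False using assms(2) by (simp add: ch_gens)
qed



lemma W_tau_sub:
  assumes "finite C" "finite B" "C \<subseteq> B"
  shows "gmul (gauss_weight t C) (tau B) = tau B"
  using assms
proof (induction C rule: finite_induct)
  case empty thus ?case by (simp add: gmul_gone_left fin_tau)
next
  case (insert i C)
  have "gmul (gauss_weight t (insert i C)) (tau B) = gmul (wfac t i) (gmul (gauss_weight t C) (tau B))"
    using insert by (simp add: gw_insert gmul_assoc)
  also have "\<dots> = gmul (wfac t i) (tau B)" using insert by simp
  also have "\<dots> = tau B"
    using insert by (simp add: gmul_gadd_left gmul_gscal_left gmul_gone_left fin_tau q_tau_mem)
                    (simp add: gadd_def gscal_def)
  finally show ?case .
qed

lemma W_tau_minus:
  assumes "finite A" "i \<in> A"
  shows "gmul (gauss_weight t A) (tau (A - {i})) = gadd (tau (A - {i})) (gscal (t i) (tau A))"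
proof -
  have A: "A = insert i (A - {i})" using assms by auto
  have "gauss_weight t A = gmul (wfac t i) (gauss_weight t (A - {i}))"
    by (subst A, rule gw_insert) (use assms in auto)
  moreover have "tau A = gmul (q i) (tau (A - {i}))"
    by (subst A, rule tau_insert) (use assms in auto)
  ultimately show ?thesis using assms
    by (simp add: gmul_assoc W_tau_sub gmul_gadd_left gmul_gscal_left gmul_gone_left fin_tau)
qed

lemma tau_off: assumes "finite A" "i \<in> A" shows "tau (A - {i}) (gens A) = 0"
proof -
  have "gens (A - {i}) \<noteq> gens A" using assms by (auto simp: gens_def)
  thus ?thesis using sbas_supp[OF tau_sbas[of "A - {i}"]] assms by (auto simp: supp_def)
qed

lemma gmul_fA:
  "gmul x (fA lam A) = (\<lambda>S. lam * (1 - of_nat (card A)) * gmul x (tau A) S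
      + (\<Sum>i\<in>A. gmul x (tau (A - {i})) S)
      - (\<Sum>i\<in>A. \<Sum>j\<in>A - {i}. gmul x (gmul (pp i j) (tau (A - {i, j}))) S))"
  unfolding fA_def pp_def
  by (simp only: gmul_diff_right gmul_add_right gmul_cmul_right gmul_sum_right)

lemma gmul2_fA:
  "gmul y (gmul x (fA lam A)) = (\<lambda>S. lam * (1 - of_nat (card A)) * gmul y (gmul x (tau A)) S
      + (\<Sum>i\<in>A. gmul y (gmul x (tau (A - {i}))) S)
      - (\<Sum>i\<in>A. \<Sum>j\<in>A - {i}. gmul y (gmul x (gmul (pp i j) (tau (A - {i, j})))) S))"
  unfolding gmul_fA
  by (simp only: gmul_diff_right gmul_add_right gmul_cmul_right gmul_sum_right)

lemma berezin_top:
  assumes "finite A" "supp (\<lambda>S. S \<subseteq> gens A) F" "F (gens A) * tau A (gens A) = c"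
  shows "berezin A F = gconst c"
proof
  fix S
  show "berezin A F S = gconst c S"
  proof (cases "S \<inter> gens A = {}")
    case False
    hence "S \<noteq> {}" by auto
    thus ?thesis using False by (simp add: berezin_def gconst_def gscal_def gone_def gbasis_def)
  next
    case True
    show ?thesis
    proof (cases "S = {}")
      case True
      thus ?thesis using assms(3)
        by (simp add: berezin_def gconst_def gscal_def gone_def[symmetric] gmul_gone_right fin_tau)
           (simp add: gone_def gbasis_def)
    next
      case False
      hence "\<not> gens A \<union> S \<subseteq> gens A" using True by auto
      hence "F (gens A \<union> S) = 0" using assms(2) by (auto simp: supp_def)
      thus ?thesis using False by (simp add: berezin_def gconst_def gscal_def gone_def gbasis_def)
    qed
  qed
qed



lemma sub_gmul: "supp (\<lambda>S. S \<subseteq> G) x \<Longrightarrow> supp (\<lambda>S. S \<subseteq> G) y \<Longrightarrow> supp (\<lambda>S. S \<subseteq> G) (gmul x y)"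
  by (erule supp_gmul, assumption) simp

lemma sub_gone: "supp (\<lambda>S. S \<subseteq> G) gone"
  by (rule supp_mono[OF supp_gbasis[of "{}"], folded gone_def]) simp

lemma sub_gw: "finite A \<Longrightarrow> supp (\<lambda>S. S \<subseteq> gens A) (gauss_weight t A)"
  unfolding gw_lprod
  by (rule lprod_supp) (auto intro!: supp_gadd supp_gscal sub_gone supp_mono[OF sbas_supp[OF q_sbas]] simp: gens_def)

lemma sub_tau: "finite B \<Longrightarrow> B \<subseteq> A \<Longrightarrow> supp (\<lambda>S. S \<subseteq> gens A) (tau B)"
  by (rule supp_mono[OF sbas_supp[OF tau_sbas]]) (auto simp: gens_def)

lemma sub_pp: "i \<in> A \<Longrightarrow> j \<in> A \<Longrightarrow> supp (\<lambda>S. S \<subseteq> gens A) (pp i j)"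
  by (rule supp_mono[OF sbas_supp[OF pp_sbas]]) (auto simp: gens_def)

lemma obs_lprod: "obs I J = lprod (\<lambda>(i, j). pp i j) (zip I J)"
  by (simp add: obs_def gprod_list_def lprod_def pp_def[abs_def])

lemma obs_Cons: "obs (a # I) (b # J) = gmul (pp a b) (obs I J)"
  by (simp add: obs_lprod)

lemma sub_obs: "set I \<subseteq> A \<Longrightarrow> set J \<subseteq> A \<Longrightarrow> supp (\<lambda>S. S \<subseteq> gens A) (obs I J)"
  unfolding obs_lprod
  by (rule lprod_supp) (auto intro!: sub_pp dest: set_zip_leftD set_zip_rightD)

lemma sub_fA: assumes "finite A" shows "supp (\<lambda>S. S \<subseteq> gens A) (fA lam A)"
  unfolding supp_def
proof (intro allI impI, rule ccontr)
  fix S assume ne: "fA lam A S \<noteq> 0" and nS: "\<not> S \<subseteq> gens A"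
  have "tau A S = 0" using supp_zero[OF sub_tau[of A A] nS] assms by simp
  moreover have "\<And>i. tau (A - {i}) S = 0" using supp_zero[OF sub_tau nS] assms by auto
  moreover have "\<And>i j. i \<in> A \<Longrightarrow> j \<in> A \<Longrightarrow> gmul (gmul (psibar i) (psi j)) (tau (A - {i, j})) S = 0"
    using supp_zero[OF sub_gmul[OF sub_pp sub_tau] nS, unfolded pp_def] assms by auto
  ultimately have "fA lam A S = 0" unfolding fA_def by simp
  thus False using ne by simp
qed

lemma cd_obs: "length I = length J \<Longrightarrow> supp (\<lambda>S. finite S \<and> card S = 2 * length I) (obs I J)"
proof (induction I arbitrary: J)
  case Nil thus ?case by (simp add: obs_lprod supp_mono[OF supp_gbasis[of "{}"], folded gone_def])
next
  case (Cons a I)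
  then obtain b J' where J: "J = b # J'" "length I = length J'" by (cases J) auto
  show ?case unfolding J obs_Cons
    by (rule supp_gmul[OF sbas_supp[OF pp_sbas] Cons.IH[OF J(2)]]) (auto simp: card_Un_disjoint)
qed

lemma card_pair: "card {(i, True), (j, False)} = 2" by simp

lemma cd_fA: assumes "finite A"
  shows "supp (\<lambda>S. finite S \<and> 2 * card A \<le> card S + 2) (fA lam A)"
  unfolding supp_def
proof (intro allI impI, rule ccontr)
  fix S assume ne: "fA lam A S \<noteq> 0" and nS: "\<not> (finite S \<and> 2 * card A \<le> card S + 2)"
  have "S \<noteq> gens A" using nS assms by (auto simp: card_gens)
  hence "tau A S = 0"
    using supp_zero[OF sbas_supp[OF tau_sbas[of A]]] assms by auto
  moreover have "\<And>i. i \<in> A \<Longrightarrow> tau (A - {i}) S = 0"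
  proof -
    fix i assume i: "i \<in> A"
    have "card A > 0" using i assms card_gt_0_iff by blast
    hence "card (A - {i}) + 1 = card A" using i assms by (simp add: card_Diff_singleton)
    hence "S \<noteq> gens (A - {i})" using nS assms by (auto simp: card_gens)
    thus "tau (A - {i}) S = 0"
      using supp_zero[OF sbas_supp[OF tau_sbas[of "A - {i}"]]] assms by auto
  qed
  moreover have "\<And>i j. i \<in> A \<Longrightarrow> j \<in> A - {i} \<Longrightarrow> gmul (gmul (psibar i) (psi j)) (tau (A - {i, j})) S = 0"
  proof -
    fix i j assume i: "i \<in> A" and j: "j \<in> A - {i}"
    have sub: "{i, j} \<subseteq> A" using i j by auto
    have c2: "card {i, j} = 2" using j by auto
    have "card {i, j} \<le> card A" using card_mono[OF assms sub] .
    moreover have "card (A - {i, j}) = card A - card {i, j}" using card_Diff_subset[of "{i,j}" A] sub by simp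
    ultimately have cA: "card (A - {i, j}) + 2 = card A" using c2 by simp
    have "supp (\<lambda>S. finite S \<and> 2 * card A \<le> card S + 2) (gmul (pp i j) (tau (A - {i, j})))"
    proof (rule supp_gmul[OF sbas_supp[OF pp_sbas] sbas_supp[OF tau_sbas]])
      show "finite (A - {i, j})" using assms by simp
      fix T U assume "finite T" "finite U" "T \<inter> U = {}" "T = {(i, True), (j, False)}" "U = gens (A - {i, j})"
      thus "finite (T \<union> U) \<and> 2 * card A \<le> card (T \<union> U) + 2"
        using cA assms by (simp add: card_Un_disjoint card_gens)
    qed
    thus "gmul (gmul (psibar i) (psi j)) (tau (A - {i, j})) S = 0"
      using nS unfolding supp_def pp_def by blast
  qed
  ultimately have "fA lam A S = 0" unfolding fA_def by simp
  thus False using ne by simp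
qed

lemma charge_kill:
  assumes "supp (\<lambda>S. ch S = c) X" "c \<noteq> (\<lambda>_. 0)"
  shows "gmul (gauss_weight t A) X (gens A) = 0"
  using top_zero[OF supp_ch_gmul[OF ch_gw assms(1)]] assms(2) by simp



lemma fun_ne: "f x \<noteq> 0 \<Longrightarrow> f \<noteq> (\<lambda>_. 0)" by auto

lemma third_zero:
  assumes "finite B" "i \<noteq> j" "supp (\<lambda>S. ch S = (\<lambda>_. 0)) X"
  shows "gmul (gauss_weight t A) (gmul X (gmul (pp i j) (tau B))) (gens A) = 0"
  by (rule charge_kill[OF supp_ch_gmul[OF assms(3) supp_ch_gmul[OF ch_pp[OF assms(2)] ch_tau[OF assms(1)]]]])
     (rule fun_ne[of _ i], use assms(2) in \<open>simp add: dl_def\<close>)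

lemma third_zero':
  assumes "finite B" "i \<noteq> j"
  shows "gmul (gauss_weight t A) (gmul (pp i j) (tau B)) (gens A) = 0"
  by (rule charge_kill[OF supp_ch_gmul[OF ch_pp[OF assms(2)] ch_tau[OF assms(1)]]])
     (rule fun_ne[of _ i], use assms(2) in \<open>simp add: dl_def\<close>)

lemma pp_tau_zero:
  assumes "finite B" "a \<noteq> b"
  shows "gmul (gauss_weight t A) (gmul (pp a b) (tau B)) (gens A) = 0"
  by (rule third_zero'[OF assms])

lemma pp_pp_zero:
  assumes "finite B" "a \<noteq> b" "i \<noteq> j" "\<not> (i = b \<and> j = a)"
  shows "gmul (gauss_weight t A) (gmul (pp a b) (gmul (pp i j) (tau B))) (gens A) = 0"
proof (rule charge_kill[OF supp_ch_gmul[OF ch_pp[OF assms(2)] supp_ch_gmul[OF ch_pp[OF assms(3)] ch_tau[OF assms(1)]]]])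
  show "(\<lambda>ia. dl a ia - dl b ia + (dl i ia - dl j ia + 0)) \<noteq> (\<lambda>_. 0)"
  proof (cases "i = b")
    case True thus ?thesis using assms by (intro fun_ne[of _ a]) (auto simp: dl_def)
  next
    case False thus ?thesis using assms by (intro fun_ne[of _ b]) (auto simp: dl_def)
  qed
qed

theorem lemma6p1:
  fixes V A :: "'v::linorder set" and t :: "'v \<Rightarrow> complex" and lam :: complex
    and I J :: "'v list" and k :: nat
  assumes "finite V" and "A \<subseteq> V"
    and "length I = k" and "length J = k"
    and "distinct I" and "distinct J"
    and "set I \<subseteq> A" and "set J \<subseteq> A"
  shows "berezin A (gmul (gauss_weight t A) (gmul (obs I J) (fA lam A)))
       = gconst (if k = 0 then lam + (\<Sum>i\<in>A. (t i - lam))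
                 else if k = 1 then 1 else 0)"
proof -
  have fA: "finite A" using assms(1,2) finite_subset by blast
  define G where "G = gens A"
  define \<sigma> where "\<sigma> = tau A G"
  have \<sigma>2: "\<sigma> * \<sigma> = 1" unfolding \<sigma>_def G_def by (rule sbas_val[OF tau_sbas[OF fA]])
  define W where "W = gauss_weight t A"
  define v where "v = (if k = 0 then lam + (\<Sum>i\<in>A. (t i - lam)) else if k = 1 then 1 else (0::complex))"
  define F where "F = gmul W (gmul (obs I J) (fA lam A))"
  have subF: "supp (\<lambda>S. S \<subseteq> gens A) F" unfolding F_def W_def
    by (intro sub_gmul sub_gw sub_obs sub_fA fA assms)
  have Wtau: "gmul W (tau A) G = \<sigma>" unfolding W_def \<sigma>_def using W_tau_sub[OF fA fA] by simp
  have Wtau1: "gmul W (tau (A - {i})) G = t i * \<sigma>" if "i \<in> A" for i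
    using W_tau_minus[OF fA that, of t] tau_off[OF fA that] unfolding W_def \<sigma>_def G_def
    by (simp add: gadd_def gscal_def)
  have expand: "gmul W (gmul X (fA lam A)) G = lam * (1 - of_nat (card A)) * gmul W (gmul X (tau A)) G
      + (\<Sum>i\<in>A. gmul W (gmul X (tau (A - {i}))) G)
      - (\<Sum>i\<in>A. \<Sum>j\<in>A - {i}. gmul W (gmul X (gmul (pp i j) (tau (A - {i, j})))) G)" for X
    by (simp only: gmul2_fA)
  have key: "F G = v * \<sigma>"
  proof (cases "k \<ge> 2")
    case True
    have o: "supp (\<lambda>S. S \<subseteq> gens A \<and> (finite S \<and> card S = 2 * length I)) (obs I J)"
      by (intro supp_conj sub_obs cd_obs) (use assms in auto)
    have f: "supp (\<lambda>S. S \<subseteq> gens A \<and> (finite S \<and> 2 * card A \<le> card S + 2)) (fA lam A)"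
      by (intro supp_conj sub_fA cd_fA fA)
    have "supp (\<lambda>_. False) (gmul (obs I J) (fA lam A))"
    proof (rule supp_gmul[OF o f])
      fix T U :: "('v \<times> bool) set"
      assume h: "finite T" "finite U" "T \<inter> U = {}" "T \<subseteq> gens A \<and> finite T \<and> card T = 2 * length I"
           "U \<subseteq> gens A \<and> finite U \<and> 2 * card A \<le> card U + 2"
      hence "card (T \<union> U) \<ge> 2 * card A + 2" using True assms(3) by (simp add: card_Un_disjoint)
      moreover have "card (T \<union> U) \<le> card (gens A)" using h fA by (intro card_mono) auto
      ultimately show False using card_gens[OF fA] by simp
    qed
    hence "gmul (obs I J) (fA lam A) = (\<lambda>_. 0)" by (auto simp: supp_def)
    thus ?thesis using True unfolding F_def v_def by simp
  next
    case False
    hence "k = 0 \<or> k = 1" by auto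
    thus ?thesis
    proof
      assume k0: "k = 0"
      hence IJ: "I = []" "J = []" using assms(3,4) by auto
      have s1: "(\<Sum>i\<in>A. gmul W (tau (A - {i})) G) = (\<Sum>i\<in>A. t i * \<sigma>)"
        by (rule sum.cong) (simp_all add: Wtau1)
      have s2: "(\<Sum>i\<in>A. \<Sum>j\<in>A - {i}. gmul W (gmul (pp i j) (tau (A - {i, j}))) G) = 0"
        unfolding W_def G_def using fA by (intro sum.neutral ballI third_zero') auto
      have "F G = lam * (1 - of_nat (card A)) * \<sigma> + (\<Sum>i\<in>A. t i * \<sigma>) - 0"
        unfolding F_def IJ obs_lprod expand
        by (simp add: gmul_gone_left fin_tau Wtau s1 s2)
      also have "(\<Sum>i\<in>A. t i * \<sigma>) = (\<Sum>i\<in>A. t i) * \<sigma>" by (simp add: sum_distrib_right)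
      also have "lam * (1 - of_nat (card A)) * \<sigma> + (\<Sum>i\<in>A. t i) * \<sigma> - 0 = v * \<sigma>" unfolding v_def using k0
        by (simp add: sum_subtractf algebra_simps)
      finally show ?thesis .
    next
      assume k1: "k = 1"
      then obtain a b where IJ: "I = [a]" "J = [b]" using assms(3,4)
        by (metis One_nat_def length_0_conv length_Suc_conv)
      have ab: "a \<in> A" "b \<in> A" using IJ assms(7,8) by auto
      have obs1: "obs I J = pp a b" unfolding IJ obs_lprod
        by (simp add: gmul_gone_right pp_def)
      show ?thesis
      proof (cases "a = b")
        case True
        have qa: "pp a b = q a" using True by (simp add: pp_def q_def)
        have t1: "gmul W (gmul (q a) (tau A)) G = 0" using q_tau_mem[OF fA ab(1)] by simp
        have t2: "gmul W (gmul (q a) (tau (A - {i}))) G = (if i = a then \<sigma> else 0)" if "i \<in> A" for i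
        proof (cases "i = a")
          case True
          have "gmul (q a) (tau (A - {i})) = tau A"
            using tau_insert[of "A - {a}" a] fA ab True by (simp add: insert_absorb)
          thus ?thesis using Wtau True by simp
        next
          case False
          thus ?thesis using q_tau_mem[of "A - {i}" a] fA ab by simp
        qed
        have t3: "gmul W (gmul (q a) (gmul (pp i j) (tau (A - {i, j})))) G = 0" if "j \<in> A - {i}" for i j
          unfolding W_def G_def using that fA by (intro third_zero ch_q) auto
        have s1: "(\<Sum>i\<in>A. gmul W (gmul (q a) (tau (A - {i}))) G) = (\<Sum>i\<in>A. if i = a then \<sigma> else 0)"
          by (rule sum.cong) (simp_all add: t2)
        have s2: "(\<Sum>i\<in>A. \<Sum>j\<in>A - {i}. gmul W (gmul (q a) (gmul (pp i j) (tau (A - {i, j})))) G) = 0"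
          by (intro sum.neutral ballI t3)
        have "F G = lam * (1 - of_nat (card A)) * 0 + (\<Sum>i\<in>A. if i = a then \<sigma> else 0) - 0"
          unfolding F_def obs1 qa expand s1 s2 t1 ..
        also have "\<dots> = v * \<sigma>" unfolding v_def using k1 ab fA by simp
        finally show ?thesis .
      next
        case False
        have t1: "gmul W (gmul (pp a b) (tau A)) G = 0"
          unfolding W_def G_def using fA False by (rule pp_tau_zero)
        have t2: "gmul W (gmul (pp a b) (tau (A - {i}))) G = 0" for i
          unfolding W_def G_def using fA False by (intro pp_tau_zero) auto
        have t3: "gmul W (gmul (pp a b) (gmul (pp i j) (tau (A - {i, j})))) G
                   = (if i = b then (if j = a then - \<sigma> else 0) else 0)" if "j \<in> A - {i}" for i j
        proof (cases "i = b \<and> j = a")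
          case True
          have e: "A - {i, j} = A - {a, b}" using True by auto
          have eq: "gmul (pp a b) (gmul (pp i j) (tau (A - {i, j}))) = gscal (-1) (tau A)"
          proof -
            have "gmul (pp a b) (gmul (pp i j) (tau (A - {i, j})))
                = gscal (-1) (gmul (q a) (gmul (q b) (tau (A - {a, b}))))"
              using True \<open>a \<noteq> b\<close> e by (simp add: gmul_assoc[symmetric] pp_pp gmul_gscal_left)
            also have "gmul (q b) (tau (A - {a, b})) = tau (A - {a})"
              using tau_insert[of "A - {a, b}" b] fA ab \<open>a \<noteq> b\<close>
              by (simp add: insert_Diff_if insert_absorb) (metis Diff_insert2 insert_Diff_single insert_absorb insert_commute DiffI singletonD)
            also have "gmul (q a) (tau (A - {a})) = tau A"
              using tau_insert[of "A - {a}" a] fA ab by (simp add: insert_absorb)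
            finally show ?thesis .
          qed
          have "gmul W (gmul (pp a b) (gmul (pp i j) (tau (A - {i, j})))) G = gscal (-1) (gmul W (tau A)) G"
            unfolding eq gmul_gscal_right ..
          thus ?thesis using True Wtau by (simp add: gscal_def)
        next
          case False
          hence "gmul W (gmul (pp a b) (gmul (pp i j) (tau (A - {i, j})))) G = 0"
            unfolding W_def G_def using fA \<open>a \<noteq> b\<close> that by (intro pp_pp_zero) auto
          thus ?thesis using False by auto
        qed
        have inner: "(\<Sum>j\<in>A - {i}. if i = b then (if j = a then - \<sigma> else 0) else 0) = (if i = b then - \<sigma> else 0)"
          for i
        proof (cases "i = b")
          case True thus ?thesis using ab \<open>a \<noteq> b\<close> fA by (simp add: sum.delta)
        qed simp
        have s2: "(\<Sum>i\<in>A. \<Sum>j\<in>A - {i}. gmul W (gmul (pp a b) (gmul (pp i j) (tau (A - {i, j})))) G)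
            = (\<Sum>i\<in>A. if i = b then - \<sigma> else 0)"
        proof (rule sum.cong[OF refl])
          fix i assume "i \<in> A"
          have "(\<Sum>j\<in>A - {i}. gmul W (gmul (pp a b) (gmul (pp i j) (tau (A - {i, j})))) G)
              = (\<Sum>j\<in>A - {i}. if i = b then (if j = a then - \<sigma> else 0) else 0)"
            by (rule sum.cong[OF refl]) (rule t3)
          thus "(\<Sum>j\<in>A - {i}. gmul W (gmul (pp a b) (gmul (pp i j) (tau (A - {i, j})))) G)
              = (if i = b then - \<sigma> else 0)" using inner by simp
        qed
        have s1: "(\<Sum>i\<in>A. gmul W (gmul (pp a b) (tau (A - {i}))) G) = 0"
          by (intro sum.neutral ballI t2)
        have "F G = lam * (1 - of_nat (card A)) * 0 + 0 - (\<Sum>i\<in>A. if i = b then - \<sigma> else 0)"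
          unfolding F_def obs1 expand s1 s2 t1 ..
        also have "\<dots> = v * \<sigma>" unfolding v_def using k1 ab fA by simp
        finally show ?thesis .
      qed
    qed
  qed
  have "F G * tau A (gens A) = v"
    using key \<sigma>2 unfolding \<sigma>_def G_def by (simp add: mult.assoc)
  thus ?thesis using berezin_top[OF fA subF] unfolding F_def W_def v_def G_def by simp
qed

end
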